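(* Let $m\ge 4$ be an integer. If $H$ is a finite simple connected graph of order greater than $m$, then the Cartesian product $K_m \,\square\, H$ is not well-dominated.
   Context: A graph is well-dominated if every minimal (with respect to inclusion) dominating set is a minimum dominating set. The Cartesian product $G\,\square\, H$ has vertex set $V(G)\times V(H)$, with $(g_1,h_1)$ adjacent to $(g_2,h_2)$ iff either ($g_1=g_2$ and $h_1h_2\in E(H)$) or ($h_1=h_2$ and $g_1g_2\in E(G)$). *)

theory Defs
  imports Main
begin

definition simple_graph :: "'a set \<Rightarrow> ('a \<Rightarrow> 'a \<Rightarrow> bool) \<Rightarrow> bool" where
  "simple_graph V E \<longleftrightarrow> finite V \<and> (\<forall>x y. E x y \<longrightarrow> x \<in> V \<and> y \<in> V)
     \<and> (\<forall>x y. E x y \<longrightarrow> E y x) \<and> (\<forall>x. \<not> E x x)"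

definition connected_graph :: "'a set \<Rightarrow> ('a \<Rightarrow> 'a \<Rightarrow> bool) \<Rightarrow> bool" where
  "connected_graph V E \<longleftrightarrow> V \<noteq> {} \<and> (\<forall>x\<in>V. \<forall>y\<in>V. E\<^sup>*\<^sup>* x y)"

definition dominating_set :: "'a set \<Rightarrow> ('a \<Rightarrow> 'a \<Rightarrow> bool) \<Rightarrow> 'a set \<Rightarrow> bool" where
  "dominating_set V E D \<longleftrightarrow> D \<subseteq> V \<and> (\<forall>v\<in>V. v \<in> D \<or> (\<exists>u\<in>D. E v u))"

definition minimal_dominating_set :: "'a set \<Rightarrow> ('a \<Rightarrow> 'a \<Rightarrow> bool) \<Rightarrow> 'a set \<Rightarrow> bool" where
  "minimal_dominating_set V E D \<longleftrightarrow> dominating_set V E D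
     \<and> (\<forall>D'. D' \<subset> D \<longrightarrow> \<not> dominating_set V E D')"

definition minimum_dominating_set :: "'a set \<Rightarrow> ('a \<Rightarrow> 'a \<Rightarrow> bool) \<Rightarrow> 'a set \<Rightarrow> bool" where
  "minimum_dominating_set V E D \<longleftrightarrow> dominating_set V E D
     \<and> (\<forall>D'. dominating_set V E D' \<longrightarrow> card D \<le> card D')"

definition well_dominated :: "'a set \<Rightarrow> ('a \<Rightarrow> 'a \<Rightarrow> bool) \<Rightarrow> bool" where
  "well_dominated V E \<longleftrightarrow>
     (\<forall>D. minimal_dominating_set V E D \<longrightarrow> minimum_dominating_set V E D)"

definition cart_prod_edges ::
  "('a \<Rightarrow> 'a \<Rightarrow> bool) \<Rightarrow> ('b \<Rightarrow> 'b \<Rightarrow> bool) \<Rightarrow> 'a \<times> 'b \<Rightarrow> 'a \<times> 'b \<Rightarrow> bool" where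
  "cart_prod_edges EG EH = (\<lambda>(g1, h1) (g2, h2).
     (g1 = g2 \<and> EH h1 h2) \<or> (h1 = h2 \<and> EG g1 g2))"

definition complete_vertices :: "nat \<Rightarrow> nat set" where
  "complete_vertices m = {0..<m}"

definition complete_edges :: "nat \<Rightarrow> nat \<Rightarrow> nat \<Rightarrow> bool" where
  "complete_edges m i j \<longleftrightarrow> i < m \<and> j < m \<and> i \<noteq> j"

end

theory Submission
  imports Defs
begin

lemma surj_ex:
  assumes "finite A" "finite Q" "card Q \<le> card A"
  shows "\<exists>f::'b \<Rightarrow> 'c. Q \<subseteq> f ` A"
proof -
  obtain A' where A': "A' \<subseteq> A" "card A' = card Q"
    using assms obtain_subset_with_card_n by metis
  have "finite A'" using A' assms finite_subset by blast
  then obtain g where "bij_betw g A' Q"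
    using A' assms finite_same_card_bij by metis
  then have "Q = g ` A'" by (simp add: bij_betw_def)
  then show ?thesis using A' by blast
qed

lemma cover2:
  assumes "finite A1" "finite A2" "finite Q" "card Q \<le> card A1" "card Q \<le> card A2"
  shows "\<exists>f::'b \<Rightarrow> 'c. Q \<subseteq> f ` A1 \<and> Q \<subseteq> f ` A2"
proof (cases "card Q \<le> card (A1 \<inter> A2)")
  case True
  then obtain f :: "'b \<Rightarrow> 'c" where "Q \<subseteq> f ` (A1 \<inter> A2)"
    using surj_ex[of "A1 \<inter> A2" Q] assms by blast
  then show ?thesis by blast
next
  case False
  let ?I = "A1 \<inter> A2"
  have fI: "finite ?I" using assms by blast
  obtain Q1 where Q1: "Q1 \<subseteq> Q" "card Q1 = card ?I"
    using False assms obtain_subset_with_card_n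
    by (metis nat_le_linear)
  obtain f1 :: "'b \<Rightarrow> 'c" where f1: "Q1 \<subseteq> f1 ` ?I"
    using surj_ex[of ?I Q1] Q1 fI assms finite_subset by (metis order_refl)
  let ?Q2 = "Q - Q1"
  have cQ2: "card ?Q2 = card Q - card ?I"
    using Q1 assms by (simp add: card_Diff_subset finite_subset)
  have c1: "card (A1 - A2) = card A1 - card ?I"
    using assms by (metis Diff_Int2 Diff_Int_distrib2 card_Diff_subset_Int finite_Int inf.idem inf_le1)
  have c2: "card (A2 - A1) = card A2 - card ?I"
    using assms by (metis Int_commute card_Diff_subset_Int finite_Int)
  obtain f2 :: "'b \<Rightarrow> 'c" where f2: "?Q2 \<subseteq> f2 ` (A1 - A2)"
    using surj_ex[of "A1 - A2" ?Q2] assms cQ2 c1 by (metis diff_le_mono finite_Diff)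
  obtain f3 :: "'b \<Rightarrow> 'c" where f3: "?Q2 \<subseteq> f3 ` (A2 - A1)"
    using surj_ex[of "A2 - A1" ?Q2] assms cQ2 c2 by (metis diff_le_mono finite_Diff)
  define f where "f = (\<lambda>h. if h \<in> ?I then f1 h else if h \<in> A1 then f2 h else f3 h)"
  have "Q1 \<subseteq> f ` ?I"
  proof
    fix q assume "q \<in> Q1"
    then obtain h where "h \<in> ?I" "q = f1 h" using f1 by blast
    then show "q \<in> f ` ?I" unfolding f_def by force
  qed
  moreover have "?Q2 \<subseteq> f ` (A1 - A2)"
  proof
    fix q assume "q \<in> ?Q2"
    then obtain h where "h \<in> A1 - A2" "q = f2 h" using f2 by blast
    then show "q \<in> f ` (A1 - A2)" unfolding f_def by force
  qed
  moreover have "?Q2 \<subseteq> f ` (A2 - A1)"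
  proof
    fix q assume "q \<in> ?Q2"
    then obtain h where "h \<in> A2 - A1" "q = f3 h" using f3 by blast
    then show "q \<in> f ` (A2 - A1)" unfolding f_def by force
  qed
  ultimately show ?thesis by blast
qed

locale wdctx =
  fixes m :: nat and V :: "'b set" and E :: "'b \<Rightarrow> 'b \<Rightarrow> bool"
  assumes m4: "m \<ge> 4" and sg: "simple_graph V E" and cg: "connected_graph V E"
    and big: "card V > m"
begin

definition GV where "GV = complete_vertices m \<times> V"
definition GE where "GE = cart_prod_edges (complete_edges m) E"
definition nb where "nb v = {w. E v w}"

lemma finV: "finite V" using sg by (simp add: simple_graph_def)
lemma EV: "E x y \<Longrightarrow> x \<in> V \<and> y \<in> V" using sg by (simp add: simple_graph_def)
lemma Esym: "E x y \<Longrightarrow> E y x" using sg by (simp add: simple_graph_def)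
lemma Eirr: "\<not> E x x" using sg by (simp add: simple_graph_def)
lemma nbV: "nb v \<subseteq> V" using EV by (auto simp: nb_def)
lemma finnb: "finite (nb v)" using nbV finV finite_subset by blast
lemma nb_iff[simp]: "w \<in> nb v \<longleftrightarrow> E v w" by (simp add: nb_def)
lemma notin_nb: "v \<notin> nb v" using Eirr by simp

lemma GE_iff: "GE (i,h) (j,g) \<longleftrightarrow> (i = j \<and> E h g) \<or> (h = g \<and> i < m \<and> j < m \<and> i \<noteq> j)"
  by (auto simp: GE_def cart_prod_edges_def complete_edges_def)

lemma GV_iff[simp]: "(j,h) \<in> GV \<longleftrightarrow> j < m \<and> h \<in> V"
  by (simp add: GV_def complete_vertices_def)

lemma finGV: "finite GV" using finV by (simp add: GV_def complete_vertices_def)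

lemma closed_all:
  assumes "s \<in> S" "s \<in> V" "\<forall>v\<in>S. \<forall>y. E v y \<longrightarrow> y \<in> S"
  shows "V \<subseteq> S"
proof
  fix y assume "y \<in> V"
  then have "E\<^sup>*\<^sup>* s y" using cg assms(2) by (simp add: connected_graph_def)
  then show "y \<in> S"
  proof (induction rule: rtranclp_induct)
    case base then show ?case using assms(1) .
  next
    case (step y z) then show ?case using assms(3) by blast
  qed
qed

lemma Vne: "V \<noteq> {}" using cg by (simp add: connected_graph_def)

lemma nb_ne: assumes "v \<in> V" shows "nb v \<noteq> {}"
proof
  assume "nb v = {}"
  then have "\<forall>y. \<not> E v y" by (auto simp: nb_def)
  then have "V \<subseteq> {v}" using closed_all[of v "{v}"] assms by auto
  then have "card V \<le> card {v}" by (intro card_mono) auto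
  then have "card V \<le> 1" by simp
  then show False using big m4 by simp
qed

lemma path2:
  assumes "v \<in> V" "y \<in> V" "y \<notin> insert v (nb v)"
  shows "\<exists>c q. E v c \<and> E c q \<and> q \<noteq> v \<and> \<not> E v q"
proof (rule ccontr)
  assume H: "\<not> ?thesis"
  have "\<forall>p\<in>insert v (nb v). \<forall>q. E p q \<longrightarrow> q \<in> insert v (nb v)"
    using H by auto
  then have "V \<subseteq> insert v (nb v)" using closed_all[of v "insert v (nb v)"] assms by blast
  then show False using assms by blast
qed

lemma forced:
  assumes "dominating_set GV GE S" "S \<subseteq> D" "v \<in> GV"
    "\<forall>y\<in>D. (v = y \<or> GE v y) \<longrightarrow> y = x"
  shows "x \<in> S"
  using assms unfolding dominating_set_def by blast

lemma minsub:
  assumes "finite D" "dominating_set GV GE D"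
  shows "\<exists>S\<subseteq>D. minimal_dominating_set GV GE S"
proof -
  have "\<exists>k. \<exists>S\<subseteq>D. dominating_set GV GE S \<and> card S = k" using assms by blast
  then obtain k where k: "\<exists>S\<subseteq>D. dominating_set GV GE S \<and> card S = k"
    and kmin: "\<forall>k'<k. \<not> (\<exists>S\<subseteq>D. dominating_set GV GE S \<and> card S = k')"
    using exists_least_iff[of "\<lambda>k. \<exists>S\<subseteq>D. dominating_set GV GE S \<and> card S = k"] by blast
  then obtain S where S: "S \<subseteq> D" "dominating_set GV GE S" "card S = k" by blast
  have "minimal_dominating_set GV GE S"
    unfolding minimal_dominating_set_def
  proof (intro conjI allI impI)
    show "dominating_set GV GE S" by fact
  next
    fix D' assume "D' \<subset> S"
    then have "card D' < card S" using S assms finite_subset psubset_card_mono by metis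
    moreover have "D' \<subseteq> D" using \<open>D' \<subset> S\<close> S by blast
    ultimately show "\<not> dominating_set GV GE D'" using kmin S by blast
  qed
  then show ?thesis using S by blast
qed

definition R0 where "R0 = {0::nat} \<times> V"

lemma R0_dom: "dominating_set GV GE R0"
  unfolding dominating_set_def R0_def
proof (intro conjI ballI)
  show "{0} \<times> V \<subseteq> GV" using m4 by auto
next
  fix v assume "v \<in> GV"
  then obtain j h where v: "v = (j,h)" "j < m" "h \<in> V" by (cases v) auto
  show "v \<in> {0} \<times> V \<or> (\<exists>u\<in>{0} \<times> V. GE v u)"
  proof (cases "j = 0")
    case True then show ?thesis using v by auto
  next
    case False
    then have "GE v (0,h)" using v m4 by (simp add: GE_iff)
    then show ?thesis using v by blast
  qed
qed

lemma R0_min: "minimal_dominating_set GV GE R0"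
  unfolding minimal_dominating_set_def
proof (intro conjI allI impI R0_dom)
  fix D' assume D': "D' \<subset> R0"
  then obtain h where h: "(0,h) \<in> R0" "(0,h) \<notin> D'" unfolding R0_def by auto
  have hV: "h \<in> V" using h unfolding R0_def by auto
  have "(1::nat,h) \<in> GV" using hV m4 by simp
  moreover have "(1,h) \<notin> D'" using D' unfolding R0_def by auto
  moreover have "\<not> GE (1,h) u" if "u \<in> D'" for u
  proof -
    have "u \<in> {0} \<times> V" using that D' unfolding R0_def by blast
    then obtain g where u: "u = (0,g)" by auto
    show ?thesis using u h that by (auto simp: GE_iff)
  qed
  ultimately show "\<not> dominating_set GV GE D'" unfolding dominating_set_def by blast
qed

lemma card_R0: "card R0 = card V" unfolding R0_def by (simp add: card_cartesian_product_singleton)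

lemma hub:
  fixes \<rho> :: "'b \<Rightarrow> nat"
  assumes XV: "X \<subseteq> V" and cV: "c \<in> V" and cX: "c \<notin> X" and Qm: "Q \<subseteq> {0..<m}" and Q0: "0 \<notin> Q"
    and cov: "\<forall>x\<in>X. E x c \<and> Q \<subseteq> \<rho> ` (nb x - X - {c})"
  defines "D \<equiv> ({j. j < m \<and> j \<notin> Q} \<times> {c}) \<union> (\<lambda>h. (if \<rho> h < m then \<rho> h else 0, h)) ` (V - X - {c})"
  shows "dominating_set GV GE D" "card D = (m - card Q) + (card V - card X - 1)"
proof -
  let ?r = "\<lambda>h. if \<rho> h < m then \<rho> h else 0"
  have m0: "0 < m" using m4 by simp
  have rm: "?r h < m" for h using m0 by simp
  show "dominating_set GV GE D"
    unfolding dominating_set_def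
  proof (intro conjI ballI)
    show "D \<subseteq> GV" unfolding D_def using cV rm by auto
  next
    fix v assume "v \<in> GV"
    then obtain j h where v: "v = (j,h)" "j < m" "h \<in> V" by (cases v) auto
    show "v \<in> D \<or> (\<exists>u\<in>D. GE v u)"
    proof (cases "h \<in> X")
      case True
      show ?thesis
      proof (cases "j \<in> Q")
        case False
        then have "(j,c) \<in> D" unfolding D_def using v by auto
        moreover have "GE v (j,c)" using cov True v by (simp add: GE_iff)
        ultimately show ?thesis by blast
      next
        case jQ: True
        then obtain p where p: "p \<in> nb h - X - {c}" "\<rho> p = j" using cov True by blast
        then have pV: "p \<in> V" using nbV by blast
        have "(j,p) \<in> D" unfolding D_def using p pV v by (auto intro!: image_eqI[of _ _ p])
        moreover have "GE v (j,p)" using p v by (simp add: GE_iff)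
        ultimately show ?thesis by blast
      qed
    next
      case hX: False
      show ?thesis
      proof (cases "h = c")
        case True
        have "(0,c) \<in> D" unfolding D_def using Q0 m0 by auto
        show ?thesis
        proof (cases "j = 0")
          case True then show ?thesis using v \<open>(0,c) \<in> D\<close> \<open>h = c\<close> by simp
        next
          case False
          then have "GE v (0,c)" using v \<open>h = c\<close> m0 by (simp add: GE_iff)
          then show ?thesis using \<open>(0,c) \<in> D\<close> by blast
        qed
      next
        case False
        then have hin: "(?r h, h) \<in> D" unfolding D_def using hX v by auto
        show ?thesis
        proof (cases "j = ?r h")
          case True then show ?thesis using hin v by simp
        next
          case False
          then have "GE v (?r h, h)" using v rm by (simp add: GE_iff)
          then show ?thesis using hin by blast
        qed
      qed
    qed
  qed
  have fX: "finite X" using XV finV finite_subset by blast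
  have disj: "({j. j < m \<and> j \<notin> Q} \<times> {c}) \<inter> (\<lambda>h. (?r h, h)) ` (V - X - {c}) = {}" by auto
  have c1: "card ({j. j < m \<and> j \<notin> Q} \<times> {c}) = m - card Q"
  proof -
    have "{j. j < m \<and> j \<notin> Q} = {0..<m} - Q" by auto
    then have "card {j. j < m \<and> j \<notin> Q} = m - card Q" using Qm by (simp add: card_Diff_subset finite_subset)
    then show ?thesis by (simp add: card_cartesian_product_singleton)
  qed
  have c2: "card ((\<lambda>h. (?r h, h)) ` (V - X - {c})) = card V - card X - 1"
  proof -
    have "inj_on (\<lambda>h. (?r h, h)) (V - X - {c})" by (auto simp: inj_on_def)
    then have "card ((\<lambda>h. (?r h, h)) ` (V - X - {c})) = card (V - X - {c})" by (rule card_image)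
    also have "\<dots> = card (V - X) - 1" using cV cX finV by (simp add: card_Diff_singleton)
    also have "\<dots> = card V - card X - 1" using XV finV by (simp add: card_Diff_subset fX)
    finally show ?thesis .
  qed
  show "card D = (m - card Q) + (card V - card X - 1)"
    unfolding D_def using disj c1 c2 finV
    by (subst card_Un_disjoint) auto
qed

end

locale wdctx2 = wdctx +
  assumes wd: "well_dominated GV GE"
begin

lemma gamma: "dominating_set GV GE D \<Longrightarrow> card V \<le> card D"
  using wd R0_min card_R0 unfolding well_dominated_def minimum_dominating_set_def by metis

lemma minle: "minimal_dominating_set GV GE S \<Longrightarrow> card S \<le> card V"
  using wd R0_dom card_R0 unfolding well_dominated_def minimum_dominating_set_def by metis

lemma hub_small:
  assumes "X \<subseteq> V" "c \<in> V" "c \<notin> X" "Q \<subseteq> {0..<m}" "0 \<notin> Q"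
    "\<forall>x\<in>X. E x c \<and> Q \<subseteq> \<rho> ` (nb x - X - {c})"
    "m < card Q + card X + 1"
  shows False
proof -
  let ?D = "({j. j < m \<and> j \<notin> Q} \<times> {c}) \<union> (\<lambda>h. (if \<rho> h < m then \<rho> h else 0, h)) ` (V - X - {c})"
  have "dominating_set GV GE ?D" "card ?D = (m - card Q) + (card V - card X - 1)"
    using hub[OF assms(1-6)] by auto
  moreover have "card X + 1 \<le> card V"
  proof -
    have "X \<subseteq> V - {c}" using assms by auto
    then have "card X \<le> card (V - {c})" using finV by (intro card_mono) auto
    then show ?thesis using assms(2) finV by (simp add: card_Diff_singleton)
         (metis Suc_pred card_gt_0_iff empty_iff not_less_eq_eq)
  qed
  moreover have "card Q \<le> m" using assms(4) by (metis card_atLeastLessThan card_mono diff_zero finite_atLeastLessThan)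
  ultimately show False using gamma[of ?D] assms(7) by linarith
qed


lemma deg_le:
  assumes aV: "a \<in> V" shows "card (nb a) \<le> m - 1"
proof (rule ccontr)
  assume H: "\<not> ?thesis"
  obtain c where c: "E a c" using nb_ne[OF aV] by auto
  let ?A = "nb a - {c}"
  let ?Q = "{1..<m}"
  have "card ?A = card (nb a) - 1" using c finnb by (simp add: card_Diff_singleton)
  then have "card ?Q \<le> card ?A" using H by simp
  then obtain \<rho> :: "'a \<Rightarrow> nat" where \<rho>: "?Q \<subseteq> \<rho> ` ?A" using surj_ex[of ?A ?Q] finnb by auto
  have eq: "nb a - {a} - {c} = ?A" using notin_nb by auto
  show False
  proof (rule hub_small[of "{a}" c ?Q \<rho>])
    show "{a} \<subseteq> V" using aV by simp
    show "c \<in> V" using c EV by blast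
    show "c \<notin> {a}" using c Eirr by auto
    show "?Q \<subseteq> {0..<m}" by auto
    show "0 \<notin> ?Q" by simp
    show "\<forall>x\<in>{a}. E x c \<and> ?Q \<subseteq> \<rho> ` (nb x - {a} - {c})" using c \<rho> eq by simp
    show "m < card ?Q + card {a} + 1" using m4 by simp
  qed
qed

lemma deg_ge:
  assumes aV: "a \<in> V" shows "m - 2 \<le> card (nb a)"
proof (rule ccontr)
  assume H: "\<not> ?thesis"
  define B where "B = V - insert a (nb a)"
  define D where "D = ({0..<m} \<times> {a}) \<union> ({0::nat} \<times> B)"
  obtain e where e: "E a e" using nb_ne[OF aV] by auto
  have eB: "e \<notin> B" "e \<noteq> a" using e Eirr unfolding B_def by auto
  have domD: "dominating_set GV GE D"
    unfolding dominating_set_def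
  proof (intro conjI ballI)
    show "D \<subseteq> GV" unfolding D_def B_def using aV m4 by auto
  next
    fix v assume "v \<in> GV"
    then obtain j h where v: "v = (j,h)" "j < m" "h \<in> V" by (cases v) auto
    show "v \<in> D \<or> (\<exists>u\<in>D. GE v u)"
    proof cases
      assume "h = a" then show ?thesis using v unfolding D_def by auto
    next
      assume ha: "h \<noteq> a"
      show ?thesis
      proof cases
        assume "E a h"
        then have "GE v (j,a)" using v Esym by (simp add: GE_iff)
        moreover have "(j,a) \<in> D" using v unfolding D_def by auto
        ultimately show ?thesis by blast
      next
        assume "\<not> E a h"
        then have hB: "h \<in> B" using v ha unfolding B_def by auto
        show ?thesis
        proof (cases "j = 0")
          case True then show ?thesis using hB v unfolding D_def by auto
        next
          case False
          then have "GE v (0,h)" using v m4 by (simp add: GE_iff)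
          moreover have "(0,h) \<in> D" using hB unfolding D_def by auto
          ultimately show ?thesis by blast
        qed
      qed
    qed
  qed
  have finD: "finite D" unfolding D_def B_def using finV by auto
  obtain S where S: "S \<subseteq> D" "minimal_dominating_set GV GE S" using minsub[OF finD domD] by blast
  have domS: "dominating_set GV GE S" using S(2) by (simp add: minimal_dominating_set_def)
  have F1: "(j,a) \<in> S" if j: "1 \<le> j" "j < m" for j
  proof (rule forced[OF domS S(1), of "(j,e)"])
    show "(j,e) \<in> GV" using j EV e by auto
    show "\<forall>y\<in>D. ((j,e) = y \<or> GE (j,e) y) \<longrightarrow> y = (j,a)"
    proof (intro ballI impI)
      fix y assume yD: "y \<in> D" and hy: "(j,e) = y \<or> GE (j,e) y"
      obtain i g where y: "y = (i,g)" by (cases y)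
      have yc: "(g = a \<and> i < m) \<or> (i = 0 \<and> g \<in> B)" using yD y unfolding D_def by auto
      show "y = (j,a)" using hy yc y eB j by (auto simp: GE_iff)
    qed
  qed
  have F2: "(0,h) \<in> S" if hB: "h \<in> B" for h
  proof (rule forced[OF domS S(1), of "(1,h)"])
    show "(1,h) \<in> GV" using hB m4 unfolding B_def by auto
    show "\<forall>y\<in>D. ((1,h) = y \<or> GE (1,h) y) \<longrightarrow> y = (0,h)"
    proof (intro ballI impI)
      fix y assume yD: "y \<in> D" and hy: "(1,h) = y \<or> GE (1,h) y"
      obtain i g where y: "y = (i,g)" by (cases y)
      have yc: "(g = a \<and> i < m) \<or> (i = 0 \<and> g \<in> B)" using yD y unfolding D_def by auto
      have "h \<noteq> a" "\<not> E h a" using hB Esym unfolding B_def by auto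
      then show "y = (0,h)" using hy yc y by (auto simp: GE_iff)
    qed
  qed
  have sub: "({1..<m} \<times> {a}) \<union> ({0} \<times> B) \<subseteq> S" using F1 F2 by auto
  have finS: "finite S" using S(1) finD finite_subset by blast
  have cB: "card B = card V - (card (nb a) + 1)"
  proof -
    have "insert a (nb a) \<subseteq> V" using aV nbV by auto
    moreover have "card (insert a (nb a)) = card (nb a) + 1" using finnb notin_nb by simp
    ultimately show ?thesis unfolding B_def using finV
      by (metis card_Diff_subset finite_insert finnb)
  qed
  have cBle: "card (nb a) + 1 \<le> card V"
  proof -
    have "insert a (nb a) \<subseteq> V" using aV nbV by auto
    then have "card (insert a (nb a)) \<le> card V" using finV by (rule card_mono[rotated])
    then show ?thesis using finnb notin_nb by simp
  qed
  have "card (({1..<m} \<times> {a}) \<union> ({0} \<times> B)) = (m - 1) + card B"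
    by (subst card_Un_disjoint) (auto simp: card_cartesian_product_singleton B_def finV)
  moreover have "card (({1..<m} \<times> {a}) \<union> ({0} \<times> B)) \<le> card S" using sub finS by (rule card_mono[rotated])
  moreover have "card S \<le> card V" using minle S(2) .
  ultimately show False using H cB cBle m4 by linarith
qed

lemma twin_ex:
  assumes uV: "u \<in> V" and du: "card (nb u) = m - 2"
  shows "\<exists>b\<in>V. b \<noteq> u \<and> \<not> E u b \<and> nb u \<subseteq> nb b"
proof (rule ccontr)
  assume H: "\<not> ?thesis"
  obtain w1 where w1: "E u w1" using nb_ne[OF uV] by auto
  let ?A = "nb u - {w1}"
  have cA: "card ?A = m - 3" using w1 finnb du by (simp add: card_Diff_singleton)
  have "card {2..<m} = m - 2" by simp
  then obtain Q where Q: "Q \<subseteq> {2..<m}" "card Q = m - 3"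
    using obtain_subset_with_card_n[of "m - 3" "{2..<m}"] by (metis diff_le_mono2 numeral_le_iff semiring_norm(72) le_numeral_Suc pred_numeral_simps(3) Suc_leD less_imp_le_nat numeral_3_eq_3 numeral_2_eq_2 le_refl)
  have finQ: "finite Q" using Q(1) finite_subset by blast
  obtain g where g: "bij_betw g ?A Q" using finite_same_card_bij[of ?A Q] finnb finQ cA Q(2) by auto
  have ginj: "inj_on g ?A" and gim: "g ` ?A = Q" using g by (auto simp: bij_betw_def)
  have gQ: "h \<in> ?A \<Longrightarrow> g h \<in> Q" for h using gim by blast
  have g2: "h \<in> ?A \<Longrightarrow> 2 \<le> g h \<and> g h < m" for h using gQ Q(1) by force
  define \<rho> where "\<rho> h = (if h \<in> ?A then g h else 0)" for h
  have \<rho>m: "\<rho> h < m" for h using g2 m4 unfolding \<rho>_def by auto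
  have eqA: "nb u - {u} - {w1} = ?A" using notin_nb by auto
  have Qsub: "Q \<subseteq> \<rho> ` (nb u - {u} - {w1})"
  proof
    fix q assume "q \<in> Q"
    then obtain h where "h \<in> ?A" "q = g h" using gim by blast
    then show "q \<in> \<rho> ` (nb u - {u} - {w1})" unfolding eqA \<rho>_def by force
  qed
  have w1V: "w1 \<in> V" using w1 EV by blast
  have w1u: "w1 \<notin> {u}" using w1 Eirr by auto
  have Qm: "Q \<subseteq> {0..<m}" using Q(1) by auto
  have Q0: "0 \<notin> Q" using Q(1) by auto
  have cov: "\<forall>x\<in>{u}. E x w1 \<and> Q \<subseteq> \<rho> ` (nb x - {u} - {w1})" using w1 Qsub by simp
  define D where "D = ({j. j < m \<and> j \<notin> Q} \<times> {w1}) \<union> (\<lambda>h. (if \<rho> h < m then \<rho> h else 0, h)) ` (V - {u} - {w1})"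
  have domD: "dominating_set GV GE D" and cD: "card D = (m - card Q) + (card V - card {u} - 1)"
    using hub[OF _ w1V w1u Qm Q0 cov] uV unfolding D_def by (simp_all add: subset_iff)
  have Dsimp: "D = ({j. j < m \<and> j \<notin> Q} \<times> {w1}) \<union> (\<lambda>h. (\<rho> h, h)) ` (V - {u} - {w1})"
    unfolding D_def using \<rho>m by simp
  have Dmem: "y \<in> D \<longleftrightarrow> (\<exists>j. y = (j,w1) \<and> j < m \<and> j \<notin> Q) \<or> (\<exists>h. y = (\<rho> h, h) \<and> h \<in> V \<and> h \<noteq> u \<and> h \<noteq> w1)" for y
    unfolding Dsimp by auto
  have finD: "finite D" using finGV domD finite_subset unfolding dominating_set_def by blast
  obtain S where S: "S \<subseteq> D" "minimal_dominating_set GV GE S" using minsub[OF finD domD] by blast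
  have domS: "dominating_set GV GE S" using S(2) by (simp add: minimal_dominating_set_def)
  have uw1: "u \<noteq> w1" using w1 Eirr by auto
  have \<rho>A: "h \<in> ?A \<Longrightarrow> \<rho> h = g h" for h unfolding \<rho>_def by simp
  have \<rho>nA: "h \<notin> ?A \<Longrightarrow> \<rho> h = 0" for h unfolding \<rho>_def by auto
  have DS: "D \<subseteq> S"
  proof
    fix y assume yD: "y \<in> D"
    show "y \<in> S"
    proof (cases "\<exists>j. y = (j,w1) \<and> j < m \<and> j \<notin> Q")
      case True
      then obtain j where j: "y = (j,w1)" "j < m" "j \<notin> Q" by blast
      show ?thesis
      proof (rule forced[OF domS S(1), of "(j,u)"])
        show "(j,u) \<in> GV" using j uV by simp
        show "\<forall>y'\<in>D. ((j,u) = y' \<or> GE (j,u) y') \<longrightarrow> y' = y"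
        proof (intro ballI impI)
          fix y' assume y'D: "y' \<in> D" and hy: "(j,u) = y' \<or> GE (j,u) y'"
          from y'D[unfolded Dmem] show "y' = y"
          proof
            assume "\<exists>j'. y' = (j',w1) \<and> j' < m \<and> j' \<notin> Q"
            then show ?thesis using hy j uw1 by (auto simp: GE_iff)
          next
            assume "\<exists>h. y' = (\<rho> h, h) \<and> h \<in> V \<and> h \<noteq> u \<and> h \<noteq> w1"
            then obtain h where h: "y' = (\<rho> h, h)" "h \<in> V" "h \<noteq> u" "h \<noteq> w1" by blast
            have "E u h \<and> j = \<rho> h" using hy h by (auto simp: GE_iff)
            then have "h \<in> ?A" "j = g h" using h \<rho>A by auto
            then show ?thesis using gQ j by auto
          qed
        qed
      qed
    next
      case False
      then obtain h where h: "y = (\<rho> h, h)" "h \<in> V" "h \<noteq> u" "h \<noteq> w1" using yD Dmem by blast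
      show ?thesis
      proof (cases "h \<in> ?A")
        case hA: True
        show ?thesis
        proof (rule forced[OF domS S(1), of "(g h,u)"])
          show "(g h,u) \<in> GV" using g2[OF hA] uV by simp
          show "\<forall>y'\<in>D. ((g h,u) = y' \<or> GE (g h,u) y') \<longrightarrow> y' = y"
          proof (intro ballI impI)
            fix y' assume y'D: "y' \<in> D" and hy: "(g h,u) = y' \<or> GE (g h,u) y'"
            from y'D[unfolded Dmem] show "y' = y"
            proof
              assume "\<exists>j'. y' = (j',w1) \<and> j' < m \<and> j' \<notin> Q"
              then show ?thesis using hy uw1 gQ[OF hA] by (auto simp: GE_iff)
            next
              assume "\<exists>h'. y' = (\<rho> h', h') \<and> h' \<in> V \<and> h' \<noteq> u \<and> h' \<noteq> w1"
              then obtain h' where h': "y' = (\<rho> h', h')" "h' \<in> V" "h' \<noteq> u" "h' \<noteq> w1" by blast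
              have "E u h' \<and> g h = \<rho> h'" using hy h' by (auto simp: GE_iff)
              then have "h' \<in> ?A" "g h = g h'" using h' \<rho>A by auto
              then have "h' = h" using ginj hA by (auto simp: inj_on_def)
              then show ?thesis using h h' hA \<rho>A by simp
            qed
          qed
        qed
      next
        case hnA: False
        have nuh: "\<not> E u h" using hnA h by auto
        have y0: "y = (0,h)" using h \<rho>nA hnA by simp
        have "\<not> nb u \<subseteq> nb h" using H h nuh by auto
        then obtain w' where w': "E u w'" "\<not> E h w'" unfolding subset_iff nb_iff by blast
        show ?thesis
        proof (cases "w' = w1")
          case True
          show ?thesis
          proof (rule forced[OF domS S(1), of "(1,h)"])
            show "(1,h) \<in> GV" using h m4 by simp
            show "\<forall>y'\<in>D. ((1,h) = y' \<or> GE (1,h) y') \<longrightarrow> y' = y"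
            proof (intro ballI impI)
              fix y' assume y'D: "y' \<in> D" and hy: "(1,h) = y' \<or> GE (1,h) y'"
              from y'D[unfolded Dmem] show "y' = y"
              proof
                assume "\<exists>j'. y' = (j',w1) \<and> j' < m \<and> j' \<notin> Q"
                then show ?thesis using hy h w' True by (auto simp: GE_iff)
              next
                assume "\<exists>h'. y' = (\<rho> h', h') \<and> h' \<in> V \<and> h' \<noteq> u \<and> h' \<noteq> w1"
                then obtain h' where h': "y' = (\<rho> h', h')" "h' \<in> V" "h' \<noteq> u" "h' \<noteq> w1" by blast
                have r1: "\<rho> h' \<noteq> 1" using g2 \<rho>A \<rho>nA by (cases "h' \<in> ?A") force+
                show ?thesis using hy h' r1 y0 \<rho>nA hnA by (auto simp: GE_iff)
              qed
            qed
          qed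
        next
          case False
          then have w'A: "w' \<in> ?A" using w' by simp
          show ?thesis
          proof (rule forced[OF domS S(1), of "(g w',h)"])
            show "(g w',h) \<in> GV" using g2[OF w'A] h by simp
            show "\<forall>y'\<in>D. ((g w',h) = y' \<or> GE (g w',h) y') \<longrightarrow> y' = y"
            proof (intro ballI impI)
              fix y' assume y'D: "y' \<in> D" and hy: "(g w',h) = y' \<or> GE (g w',h) y'"
              from y'D[unfolded Dmem] show "y' = y"
              proof
                assume "\<exists>j'. y' = (j',w1) \<and> j' < m \<and> j' \<notin> Q"
                then show ?thesis using hy h gQ[OF w'A] by (auto simp: GE_iff)
              next
                assume "\<exists>h'. y' = (\<rho> h', h') \<and> h' \<in> V \<and> h' \<noteq> u \<and> h' \<noteq> w1"
                then obtain h' where h': "y' = (\<rho> h', h')" "h' \<in> V" "h' \<noteq> u" "h' \<noteq> w1" by blast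
                show ?thesis
                proof (cases "h' = h")
                  case True then show ?thesis using h' y0 \<rho>nA hnA by simp
                next
                  case False
                  then have "g w' = \<rho> h' \<and> E h h'" using hy h' by (auto simp: GE_iff)
                  moreover have "\<rho> h' \<noteq> 0" using calculation g2[OF w'A] by simp
                  ultimately have "h' \<in> ?A" "g w' = g h'" using \<rho>A \<rho>nA by (metis, metis)
                  then have "h' = w'" using ginj w'A by (auto simp: inj_on_def)
                  then show ?thesis using \<open>g w' = \<rho> h' \<and> E h h'\<close> w' by simp
                qed
              qed
            qed
          qed
        qed
      qed
    qed
  qed
  have finS: "finite S" using S(1) finD finite_subset by blast
  have "card D \<le> card S" using DS finS by (rule card_mono[rotated])
  moreover have "card S \<le> card V" using minle S(2) .
  moreover have "card V \<ge> 2" using big m4 by simp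
  ultimately show False using cD Q(2) m4 by simp
qed

lemma no_S2:
  assumes u1V: "u1 \<in> V" and u2V: "u2 \<in> V" and d1: "card (nb u1) = m - 1" and d2: "card (nb u2) = m - 1"
    and ne: "u1 \<noteq> u2" and na: "\<not> E u1 u2" and c1: "E u1 c" and c2: "E u2 c"
  shows False
proof -
  let ?A1 = "nb u1 - {c}" and ?A2 = "nb u2 - {c}" and ?Q = "{2..<m}"
  have cA1: "card ?A1 = m - 2" using c1 finnb d1 by (simp add: card_Diff_singleton)
  have cA2: "card ?A2 = m - 2" using c2 finnb d2 by (simp add: card_Diff_singleton)
  obtain \<rho> :: "'a \<Rightarrow> nat" where \<rho>: "?Q \<subseteq> \<rho> ` ?A1" "?Q \<subseteq> \<rho> ` ?A2"
    using cover2[of ?A1 ?A2 ?Q] finnb cA1 cA2 by auto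
  have na2: "\<not> E u2 u1" using na Esym by blast
  have e1: "nb u1 - {u1,u2} - {c} = ?A1" using na notin_nb by auto
  have e2: "nb u2 - {u1,u2} - {c} = ?A2" using na2 notin_nb by auto
  show False
  proof (rule hub_small[of "{u1,u2}" c ?Q \<rho>])
    show "{u1,u2} \<subseteq> V" using u1V u2V by simp
    show "c \<in> V" using c1 EV by blast
    show "c \<notin> {u1,u2}" using c1 c2 Eirr by auto
    show "?Q \<subseteq> {0..<m}" by auto
    show "0 \<notin> ?Q" by simp
    show "\<forall>x\<in>{u1,u2}. E x c \<and> ?Q \<subseteq> \<rho> ` (nb x - {u1,u2} - {c})" using c1 c2 \<rho> e1 e2 by simp
    show "m < card ?Q + card {u1,u2} + 1" using m4 ne by simp
  qed
qed

lemma no_S4: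
  assumes uV: "u \<in> V" and du: "card (nb u) = m - 2" and bV: "b \<in> V" and bu: "b \<noteq> u" and nub: "\<not> E u b"
    and sub: "nb u \<subseteq> nb b" and uw: "E u w" and wz: "E w z" and zu: "z \<noteq> u" and nuz: "\<not> E u z"
    and zb: "z \<noteq> b" and cz: "m - 2 \<le> card (nb z - {b})"
  shows False
proof -
  let ?A1 = "nb u - {w}" and ?A2 = "nb z - {b} - {w}" and ?Q = "{3..<m}"
  have cA1: "card ?A1 = m - 3" using uw finnb du by (simp add: card_Diff_singleton)
  have wb: "w \<noteq> b" using uw nub by auto
  have zw: "E z w" using wz by (rule Esym)
  have nzu: "\<not> E z u" using nuz Esym by blast
  have "w \<in> nb z - {b}" using zw wb by simp
  then have cA2: "m - 3 \<le> card ?A2" using cz finnb by (simp add: card_Diff_singleton)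
  obtain \<rho> :: "'a \<Rightarrow> nat" where \<rho>: "?Q \<subseteq> \<rho> ` ?A1" "?Q \<subseteq> \<rho> ` ?A2"
    using cover2[of ?A1 ?A2 ?Q] finnb cA1 cA2 by auto
  have s1: "?A1 \<subseteq> nb u - {u,b,z} - {w}" using nub nuz notin_nb by auto
  have s2: "?A1 \<subseteq> nb b - {u,b,z} - {w}" using nub nuz notin_nb sub by auto
  have s3: "?A2 \<subseteq> nb z - {u,b,z} - {w}" using nzu notin_nb by auto
  have wV: "w \<in> V" using uw EV by blast
  have zV: "z \<in> V" using wz EV by blast
  show False
  proof (rule hub_small[of "{u,b,z}" w ?Q \<rho>])
    show "{u,b,z} \<subseteq> V" using uV bV zV by simp
    show "w \<in> V" by fact
    show "w \<notin> {u,b,z}" using uw wz wb Eirr by auto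
    show "?Q \<subseteq> {0..<m}" by auto
    show "0 \<notin> ?Q" by simp
    have "E u w" "E b w" "E z w" using uw sub zw by auto
    moreover have "?Q \<subseteq> \<rho> ` (nb u - {u,b,z} - {w})" using \<rho>(1) image_mono[OF s1] by (rule subset_trans)
    moreover have "?Q \<subseteq> \<rho> ` (nb b - {u,b,z} - {w})" using \<rho>(1) image_mono[OF s2] by (rule subset_trans)
    moreover have "?Q \<subseteq> \<rho> ` (nb z - {u,b,z} - {w})" using \<rho>(2) image_mono[OF s3] by (rule subset_trans)
    ultimately show "\<forall>x\<in>{u,b,z}. E x w \<and> ?Q \<subseteq> \<rho> ` (nb x - {u,b,z} - {w})" by (simp only: ball_simps)
    show "m < card ?Q + card {u,b,z} + 1" using m4 bu zu zb by simp
  qed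
qed

lemma F1:
  assumes uV: "u \<in> V" and du: "card (nb u) = m - 2" and bV: "b \<in> V" and bu: "b \<noteq> u" and nub: "\<not> E u b"
    and sub: "nb u \<subseteq> nb b" and uw: "E u w" and wz: "E w z" and zu: "z \<noteq> u" and nuz: "\<not> E u z"
    and zb: "z \<noteq> b"
  shows "E z b \<and> card (nb z) = m - 2"
proof -
  have zV: "z \<in> V" using wz EV by blast
  have lt: "card (nb z - {b}) < m - 2"
  proof (rule ccontr)
    assume "\<not> card (nb z - {b}) < m - 2"
    then show False using no_S4[OF assms] by (simp add: not_less)
  qed
  have ge: "m - 2 \<le> card (nb z)" using deg_ge[OF zV] .
  have le: "card (nb z) \<le> m - 1" using deg_le[OF zV] .
  have zb': "E z b"
  proof (rule ccontr)
    assume "\<not> E z b"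
    then have "nb z - {b} = nb z" by auto
    then show False using lt ge by simp
  qed
  then have "card (nb z - {b}) = card (nb z) - 1" using finnb by (simp add: card_Diff_singleton)
  then show ?thesis using zb' lt ge le m4 by linarith
qed

lemma degs: "v \<in> V \<Longrightarrow> card (nb v) = m - 2 \<or> card (nb v) = m - 1"
  using deg_le[of v] deg_ge[of v] m4 by linarith

lemma contra: False
proof -
  obtain u where uV: "u \<in> V" and du: "card (nb u) = m - 2"
  proof (rule ccontr)
    assume H: "\<not> thesis"
    have all: "\<forall>v\<in>V. card (nb v) = m - 1" using H that degs by blast
    obtain v where vV: "v \<in> V" using Vne by blast
    have "card (insert v (nb v)) = m" using all vV finnb notin_nb m4 by simp
    then have "card (insert v (nb v)) < card V" using big by simp
    have "\<not> V \<subseteq> insert v (nb v)"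
    proof
      assume "V \<subseteq> insert v (nb v)"
      then have "card V \<le> card (insert v (nb v))" using finnb by (intro card_mono) auto
      then show False using \<open>card (insert v (nb v)) < card V\<close> by simp
    qed
    then obtain y where "y \<in> V" "y \<notin> insert v (nb v)" by blast
    then obtain c q where cq: "E v c" "E c q" "q \<noteq> v" "\<not> E v q" using path2[OF vV] by blast
    have qV: "q \<in> V" using cq EV by blast
    have "E q c" using cq(2) by (rule Esym)
    have dv: "card (nb v) = m - 1" using all vV by blast
    have dq: "card (nb q) = m - 1" using all qV by blast
    show False by (rule no_S2[OF vV qV dv dq not_sym[OF cq(3)] cq(4) cq(1) \<open>E q c\<close>])
  qed
  obtain b where bV: "b \<in> V" and bu: "b \<noteq> u" and nub: "\<not> E u b" and sub: "nb u \<subseteq> nb b"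
    using twin_ex[OF uV du] by blast
  have nbu: "\<not> E b u" using nub Esym[of b u] by blast
  have F: "E z b \<and> card (nb z) = m - 2" if "E u w" "E w z" "z \<noteq> u" "\<not> E u z" "z \<noteq> b" for w z
    using F1[OF uV du bV bu nub sub that] .
  have finb: "finite (nb b)" by (rule finnb)
  show False
  proof (cases "card (nb b) = m - 2")
    case True
    have eq: "nb u = nb b" using card_subset_eq[OF finb sub] True du by simp
    let ?S = "{u,b} \<union> nb u"
    have closed: "\<forall>v\<in>?S. \<forall>y. E v y \<longrightarrow> y \<in> ?S"
    proof (intro ballI allI impI)
      fix v y assume vS: "v \<in> ?S" and vy: "E v y"
      show "y \<in> ?S"
      proof (cases "v = u")
        case True then show ?thesis using vy by simp
      next
        case vu: False
        show ?thesis
        proof (cases "v = b")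
          case True then show ?thesis using vy eq by simp
        next
          case False
          then have uv: "E u v" using vS vu by simp
          show ?thesis
          proof (rule ccontr)
            assume ny: "y \<notin> ?S"
            then have "y \<noteq> u" "\<not> E u y" "y \<noteq> b" by auto
            then have "E y b" using F[OF uv vy] by blast
            then have "E b y" by (rule Esym)
            then have "y \<in> nb b" by simp
            then have "y \<in> nb u" using eq by simp
            then have "E u y" by simp
            then show False using ny by simp
          qed
        qed
      qed
    qed
    have "V \<subseteq> ?S" using closed_all[of u ?S] uV closed by blast
    then have "card V \<le> card ?S" using finnb by (intro card_mono) auto
    also have "card ?S \<le> card {u,b} + card (nb u)" by (rule card_Un_le)
    also have "\<dots> \<le> 2 + (m - 2)" using du bu by simp
    finally show False using big m4 by linarith
  next
    case False
    then have db: "card (nb b) = m - 1" using degs[OF bV] by blast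
    have "card (nb b - nb u) = 1" using card_Diff_subset[OF finnb sub] db du m4 by simp
    then obtain x where x: "nb b - nb u = {x}" by (rule card_1_singletonE)
    have bx: "E b x" and nux: "\<not> E u x" using x by auto
    have Nb: "E u y \<or> y = x" if "E b y" for y
    proof -
      have "y \<in> nb b" using that by simp
      then have "y \<in> nb u \<or> y \<in> nb b - nb u" by blast
      then show ?thesis using x by simp
    qed
    have xV: "x \<in> V" using bx EV by blast
    have xu: "x \<noteq> u" using bx nbu by auto
    have xb: "x \<noteq> b" using bx Eirr by auto
    have xb': "E x b" using bx by (rule Esym)
    have nxu: "\<not> E x u" using nux Esym[of x u] by blast
    have Fact2: "y = u \<or> E u y \<or> y = b \<or> y = x" if "E u w" "E w y" for w y
    proof (rule ccontr)
      assume "\<not> ?thesis"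
      then have "y \<noteq> u" "\<not> E u y" "y \<noteq> b" "y \<noteq> x" by auto
      then have "E y b" using F[OF that] by blast
      then have "E b y" by (rule Esym)
      then show False using Nb \<open>\<not> E u y\<close> \<open>y \<noteq> x\<close> by blast
    qed
    show False
    proof (cases "\<exists>w. E u w \<and> E w x")
      case False
      have dx: "m - 2 \<le> card (nb x)" using deg_ge[OF xV] .
      have "card (nb x - {b}) \<ge> card (nb x) - 1" using diff_card_le_card_Diff[of "{b}" "nb x"] by simp
      then have "card (nb x - {b}) > 0" using dx m4 by linarith
      then have "nb x - {b} \<noteq> {}" by (metis card.empty less_irrefl)
      then obtain y where "y \<in> nb x - {b}" by blast
      then have xy: "E x y" and yb: "y \<noteq> b" by auto
      have yx': "E y x" using xy by (rule Esym)
      have yu: "y \<noteq> u" using xy nxu by auto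
      have nuy: "\<not> E u y" using False yx' by blast
      have yx: "y \<noteq> x" using xy Eirr by auto
      have nby: "\<not> E b y" using Nb nuy yx by blast
      have yV: "y \<in> V" using xy EV by blast
      have by': "b \<noteq> y" using yb by simp
      have dy: "card (nb y) = m - 2"
      proof (rule ccontr)
        assume "card (nb y) \<noteq> m - 2"
        then have "card (nb y) = m - 1" using degs[OF yV] by blast
        then show False using no_S2[OF bV yV db _ by' nby bx yx'] by blast
      qed
      obtain b2 where byV: "b2 \<in> V" and byy: "b2 \<noteq> y" and nyby: "\<not> E y b2" and suby: "nb y \<subseteq> nb b2"
        using twin_ex[OF yV dy] by blast
      have nyb: "\<not> E y b" using nby Esym[of y b] by blast
      have "b = b2"
      proof (rule ccontr)
        assume "b \<noteq> b2"
        then have "card (nb b) = m - 2" using F1[OF yV dy byV byy nyby suby yx' xb' by' nyb] by blast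
        then show False using db m4 by simp
      qed
      then have subb: "nb y \<subseteq> nb b" using suby by simp
      have "nb y \<subseteq> {x}"
      proof
        fix t assume "t \<in> nb y"
        then have yt: "E y t" by simp
        then have "E b t" using subb by auto
        then have "E u t \<or> t = x" using Nb by blast
        then show "t \<in> {x}"
        proof
          assume ut: "E u t"
          have "E t y" using yt by (rule Esym)
          then have "y = u \<or> E u y \<or> y = b \<or> y = x" using Fact2[OF ut] by blast
          then show ?thesis using yu nuy yb yx by blast
        qed simp
      qed
      then have "card (nb y) \<le> card {x}" by (intro card_mono) simp_all
      then have "card (nb y) \<le> 1" by simp
      then show False using dy m4 by simp
    next
      case True
      then obtain w0 where uw0: "E u w0" and w0x: "E w0 x" by blast
      have dx: "card (nb x) = m - 2" using F[OF uw0 w0x xu nux xb] by blast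
      obtain bx where bxV: "bx \<in> V" and bxx: "bx \<noteq> x" and nxbx: "\<not> E x bx" and subx: "nb x \<subseteq> nb bx"
        using twin_ex[OF xV dx] by blast
      have bxu: "bx \<noteq> u"
      proof
        assume "bx = u"
        then have "b \<in> nb u" using subx xb' by auto
        then show False using nub by simp
      qed
      have xw0: "E x w0" using w0x by (rule Esym)
      have w0u: "E w0 u" using uw0 by (rule Esym)
      have "E u bx" using F1[OF xV dx bxV bxx nxbx subx xw0 w0u xu[symmetric] nxu bxu[symmetric]] by blast
      then have ubx: "E u bx" .
      have Nx: "nb x \<subseteq> insert b (nb u - {bx})"
      proof
        fix t assume "t \<in> nb x"
        then have xt: "E x t" by simp
        then have bxt: "E bx t" using subx by auto
        have "t = u \<or> E u t \<or> t = b \<or> t = x" using Fact2[OF ubx bxt] .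
        moreover have "t \<noteq> u" using xt nxu by auto
        moreover have "t \<noteq> x" using xt Eirr by auto
        moreover have "t \<noteq> bx" using xt nxbx by auto
        ultimately show "t \<in> insert b (nb u - {bx})" by auto
      qed
      have nbub: "b \<notin> nb u" using nub by simp
      have c1: "card (insert b (nb u - {bx})) = m - 2"
        using nbub ubx du finnb m4 by (simp add: card_Diff_singleton)
      have eqx: "nb x = insert b (nb u - {bx})"
        using card_seteq[OF _ Nx] c1 dx finnb by simp
      let ?W = "nb u - {bx}"
      have cW: "card ?W = m - 3" using ubx du finnb by (simp add: card_Diff_singleton)
      then have "card ?W > 0" using m4 by simp
      then have "?W \<noteq> {}" by (metis card.empty less_irrefl)
      then obtain c where cW': "c \<in> ?W" by blast
      let ?A = "?W - {c}" and ?Q = "{4..<m}"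
      have cA: "card ?A = m - 4" using cW cW' finnb by (simp add: card_Diff_singleton)
      obtain \<rho> :: "'a \<Rightarrow> nat" where \<rho>: "?Q \<subseteq> \<rho> ` ?A" using surj_ex[of ?A ?Q] finnb cA by auto
      have uc: "E u c" using cW' by simp
      have cV: "c \<in> V" using uc EV by blast
      have Wsub: "?W \<subseteq> nb x" using eqx by auto
      have AX: "?A \<subseteq> nb y - {u,b,x,bx} - {c}" if "?W \<subseteq> nb y" for y
        using that notin_nb nbub nux by auto
      have Au: "?A \<subseteq> nb u - {u,b,x,bx} - {c}" using AX by blast
      have Ab: "?A \<subseteq> nb b - {u,b,x,bx} - {c}" using AX sub by blast
      have Ax: "?A \<subseteq> nb x - {u,b,x,bx} - {c}" using AX Wsub by blast
      have Abx: "?A \<subseteq> nb bx - {u,b,x,bx} - {c}" using AX Wsub subx by blast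
      have Eu: "E u c" by (rule uc)
      have Eb: "E b c" using uc sub by auto
      have "c \<in> nb x" using cW' Wsub by blast
      then have Ex: "E x c" by simp
      have "c \<in> nb bx" using cW' Wsub subx by blast
      then have Ebx: "E bx c" by simp
      show False
      proof (rule hub_small[of "{u,b,x,bx}" c ?Q \<rho>])
        show "{u,b,x,bx} \<subseteq> V" using uV bV xV bxV by simp
        show "c \<in> V" by (rule cV)
        show "c \<notin> {u,b,x,bx}" using cW' Eirr nbub nux by auto
        show "?Q \<subseteq> {0..<m}" by auto
        show "0 \<notin> ?Q" by simp
        have q1: "?Q \<subseteq> \<rho> ` (nb u - {u,b,x,bx} - {c})" using \<rho> image_mono[OF Au] by (rule subset_trans)
        have q2: "?Q \<subseteq> \<rho> ` (nb b - {u,b,x,bx} - {c})" using \<rho> image_mono[OF Ab] by (rule subset_trans)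
        have q3: "?Q \<subseteq> \<rho> ` (nb x - {u,b,x,bx} - {c})" using \<rho> image_mono[OF Ax] by (rule subset_trans)
        have q4: "?Q \<subseteq> \<rho> ` (nb bx - {u,b,x,bx} - {c})" using \<rho> image_mono[OF Abx] by (rule subset_trans)
        show "\<forall>x'\<in>{u,b,x,bx}. E x' c \<and> ?Q \<subseteq> \<rho> ` (nb x' - {u,b,x,bx} - {c})"
          using q1 q2 q3 q4 Eu Eb Ex Ebx by (simp only: ball_simps)
        have d1: "u \<noteq> b" "u \<noteq> x" "u \<noteq> bx" "b \<noteq> x" "b \<noteq> bx" "x \<noteq> bx"
          using bu xu bxu xb ubx nub bxx by auto
        then have "card {u,b,x,bx} = 4" by simp
        then show "m < card ?Q + card {u,b,x,bx} + 1" using m4 by simp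
      qed
    qed
  qed
qed

end

theorem proposition24:
  fixes m :: nat and V :: "'b set" and E :: "'b \<Rightarrow> 'b \<Rightarrow> bool"
  assumes "m \<ge> 4"
    and "simple_graph V E"
    and "connected_graph V E"
    and "card V > m"
  shows "\<not> well_dominated (complete_vertices m \<times> V)
                           (cart_prod_edges (complete_edges m) E)"
proof
  assume wd: "well_dominated (complete_vertices m \<times> V) (cart_prod_edges (complete_edges m) E)"
  interpret w: wdctx m V E using assms by unfold_locales auto
  interpret w2: wdctx2 m V E
  proof unfold_locales
    show "well_dominated w.GV w.GE" using wd unfolding w.GV_def w.GE_def .
  qed
  show False by (rule w2.contra)
qed

end
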